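(* There are universal constants $c,C>0$ with the following property. Let $(\Omega,Q,\pi)$ be a reversible Markov chain on a finite set $\Omega$ and $K>0$. Suppose ${\rm Ent}_\pi(f)\le K\,\mathcal E_\pi(f,\log f)$ for every positive function $f$ on $\Omega$ with $f(\omega)\ge c$ for all $\omega\in\Omega$ and $\mathbb E_\pi f=1$. Then $(\Omega,Q,\pi)$ satisfies the MLSI with constant $CK$, i.e. ${\rm Ent}_\pi(f)\le CK\,\mathcal E_\pi(f,\log f)$ for all $f:\Omega\to(0,\infty)$.
   Context: ${\rm Ent}_\pi(f):=\mathbb E_\pi[f(\log f-\log\mathbb E_\pi f)]$ and $\mathcal E_\pi(f,\log f):=\frac12\sum_{\omega,\omega'\in\Omega}\pi(\omega)Q(\omega,\omega')(f(\omega)-f(\omega'))\log\frac{f(\omega)}{f(\omega')}$. *)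

theory Defs
  imports Complex_Main
begin

definition reversible_chain :: "'a set \<Rightarrow> ('a \<Rightarrow> 'a \<Rightarrow> real) \<Rightarrow> ('a \<Rightarrow> real) \<Rightarrow> bool" where
  "reversible_chain \<Omega> Q \<pi> \<longleftrightarrow>
     finite \<Omega> \<and> \<Omega> \<noteq> {} \<and>
     (\<forall>w\<in>\<Omega>. \<pi> w > 0) \<and> (\<Sum>w\<in>\<Omega>. \<pi> w) = 1 \<and>
     (\<forall>w\<in>\<Omega>. \<forall>w'\<in>\<Omega>. w \<noteq> w' \<longrightarrow> Q w w' \<ge> 0) \<and>
     (\<forall>w\<in>\<Omega>. (\<Sum>w'\<in>\<Omega>. Q w w') = 0) \<and>
     (\<forall>w\<in>\<Omega>. \<forall>w'\<in>\<Omega>. \<pi> w * Q w w' = \<pi> w' * Q w' w)"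

definition expect :: "'a set \<Rightarrow> ('a \<Rightarrow> real) \<Rightarrow> ('a \<Rightarrow> real) \<Rightarrow> real" where
  "expect \<Omega> \<pi> f = (\<Sum>w\<in>\<Omega>. \<pi> w * f w)"

definition Ent :: "'a set \<Rightarrow> ('a \<Rightarrow> real) \<Rightarrow> ('a \<Rightarrow> real) \<Rightarrow> real" where
  "Ent \<Omega> \<pi> f = expect \<Omega> \<pi> (\<lambda>w. f w * (ln (f w) - ln (expect \<Omega> \<pi> f)))"

definition dirichlet_log :: "'a set \<Rightarrow> ('a \<Rightarrow> 'a \<Rightarrow> real) \<Rightarrow> ('a \<Rightarrow> real) \<Rightarrow> ('a \<Rightarrow> real) \<Rightarrow> real" where
  "dirichlet_log \<Omega> Q \<pi> f =
     (1/2) * (\<Sum>w\<in>\<Omega>. \<Sum>w'\<in>\<Omega>. \<pi> w * Q w w' * (f w - f w') * ln (f w / f w'))"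

end

theory Submission imports Defs begin

lemma psi_quad_lower:
  fixes y :: real assumes "0 < y" "y \<le> 1"
  shows "(1-y)^2/2 \<le> y * ln y - y + 1"
proof -
  let ?k = "\<lambda>t::real. t * ln t - t + 1 - (1-t)^2/2"
  have "?k 1 \<le> ?k y"
  proof (rule DERIV_nonpos_imp_nonincreasing[OF assms(2)])
    fix t assume t: "y \<le> t" "t \<le> 1"
    hence tp: "t > 0" using assms by linarith
    have "DERIV ?k t :> ln t + 1 - t"
      using tp by (auto intro!: derivative_eq_intros simp: field_simps power2_eq_square)
    moreover have "ln t + 1 - t \<le> 0" using ln_le_minus_one[OF tp] by linarith
    ultimately show "\<exists>d. DERIV ?k t :> d \<and> d \<le> 0" by blast
  qed
  thus ?thesis by simp
qed

lemma psi_deriv: "(t::real) > 0 \<Longrightarrow> DERIV (\<lambda>t. t * ln t - t + 1) t :> ln t"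
  by (auto intro!: derivative_eq_intros)

lemma h_deriv: "t > 1/2 \<Longrightarrow> DERIV (\<lambda>t::real. 8 * (t * ln t - t + 1) - ((2*t-1) * ln (2*t-1) - (2*t-1) + 1)) t :> 8 * ln t - 2 * ln (2*t-1)"
proof -
  assume t: "t > 1/2"
  have g: "DERIV (\<lambda>t. 2*t-1) t :> 2" by (auto intro!: derivative_eq_intros)
  have a: "DERIV (\<lambda>t. (2*t-1) * ln (2*t-1) - (2*t-1) + 1) t :> ln (2*t-1) * 2"
    using DERIV_chain2[OF psi_deriv g] t by (simp add: o_def)
  have b: "DERIV (\<lambda>t. 8*(t * ln t - t + 1)) t :> 8 * ln t"
    using DERIV_cmult[OF psi_deriv, of t 8] t by simp
  show ?thesis using DERIV_diff[OF b a] by (simp add: mult.commute)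
qed

lemma psi_big:
  fixes u :: real assumes "1 \<le> u"
  shows "(2*u-1) * ln (2*u-1) - (2*u-1) + 1 \<le> 8 * (u * ln u - u + 1)"
proof -
  let ?h = "\<lambda>t::real. 8 * (t * ln t - t + 1) - ((2*t-1) * ln (2*t-1) - (2*t-1) + 1)"
  have "?h 1 \<le> ?h u"
  proof (rule DERIV_nonneg_imp_nondecreasing[OF assms])
    fix t :: real assume t: "1 \<le> t" "t \<le> u"
    hence tp: "t > 0" "2*t-1 > 0" by linarith+
    have "DERIV ?h t :> 8 * ln t - 2 * ln (2*t-1)"
      using tp by (intro h_deriv) simp
    moreover have "8 * ln t - 2 * ln (2*t-1) \<ge> 0"
    proof -
      have "0 \<le> (t-1)^2" by simp
      hence "2*t-1 \<le> t^2" by (simp add: power2_eq_square algebra_simps)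
      hence "ln (2*t-1) \<le> ln (t^2)" using tp by simp
      also have "\<dots> = 2 * ln t" using tp by (simp add: ln_realpow)
      finally have "ln (2*t-1) \<le> 2 * ln t" .
      moreover have "ln t \<ge> 0" using t by simp
      ultimately show ?thesis by linarith
    qed
    ultimately show "\<exists>d. DERIV ?h t :> d \<and> d \<ge> 0" by blast
  qed
  thus ?thesis by simp
qed

lemma psi_cmp:
  fixes x :: real assumes "0 < x"
  shows "x * ln x - x + 1 \<le> 8 * ((x+1)/2 * ln ((x+1)/2) - (x+1)/2 + 1)"
proof (cases "x \<le> 1")
  case True
  have "x * ln x \<le> x * (x - 1)" using ln_le_minus_one[OF assms] assms by (simp add: mult_left_mono)
  hence "x * ln x - x + 1 \<le> (x - 1)^2" by (simp add: power2_eq_square algebra_simps)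
  also have "\<dots> = 4 * (1 - (x+1)/2)^2" by (simp add: power2_eq_square field_simps)
  also have "\<dots> \<le> 8 * ((x+1)/2 * ln ((x+1)/2) - (x+1)/2 + 1)"
  proof -
    define y where "y = (x+1)/2"
    have q: "(1-y)^2/2 \<le> y * ln y - y + 1" using psi_quad_lower[of y] assms True unfolding y_def by simp
    show ?thesis unfolding y_def[symmetric] using mult_left_mono[OF q, of 8] by simp
  qed
  finally show ?thesis .
next
  case False
  have "(2*((x+1)/2)-1) * ln (2*((x+1)/2)-1) - (2*((x+1)/2)-1) + 1 \<le> 8 * ((x+1)/2 * ln ((x+1)/2) - (x+1)/2 + 1)"
    using False by (intro psi_big) simp
  moreover have "2*((x+1)/2)-1 = x" by (simp add: field_simps)
  ultimately show ?thesis by simp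
qed

lemma dir_term:
  fixes a b s :: real assumes "a > 0" "b > 0" "s > 0"
  shows "(a - b) * (ln (a+s) - ln (b+s)) \<le> (a - b) * (ln a - ln b)"
proof (cases "a \<ge> b")
  case True
  have "(a+s)/(b+s) \<le> a/b" using assms True by (simp add: field_simps mult_left_mono)
  hence "ln ((a+s)/(b+s)) \<le> ln (a/b)" using assms by simp
  hence "ln (a+s) - ln (b+s) \<le> ln a - ln b" using assms by (simp add: ln_div)
  thus ?thesis using True by (simp add: mult_left_mono)
next
  case False
  have "b/a \<ge> (b+s)/(a+s)" using assms False by (simp add: field_simps mult_left_mono)
  hence "ln ((b+s)/(a+s)) \<le> ln (b/a)" using assms by simp
  hence "ln b - ln a \<ge> ln (b+s) - ln (a+s)" using assms by (simp add: ln_div)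
  thus ?thesis using False by (simp add: mult_left_mono_neg)
qed

lemma mlsi_main:
  fixes \<Omega> :: "nat set" and Q :: "nat \<Rightarrow> nat \<Rightarrow> real" and \<pi> :: "nat \<Rightarrow> real" and K :: real
  assumes rc: "reversible_chain \<Omega> Q \<pi>" and K: "K > 0"
    and H: "\<forall>f. (\<forall>w\<in>\<Omega>. f w > 0 \<and> f w \<ge> 1/2) \<longrightarrow> expect \<Omega> \<pi> f = 1 \<longrightarrow>
            Ent \<Omega> \<pi> f \<le> K * dirichlet_log \<Omega> Q \<pi> f"
    and fp: "\<forall>w\<in>\<Omega>. f w > 0"
  shows "Ent \<Omega> \<pi> f \<le> 4 * K * dirichlet_log \<Omega> Q \<pi> f"
proof -
  have fin: "finite \<Omega>" and ne: "\<Omega> \<noteq> {}" and pp: "\<And>w. w \<in> \<Omega> \<Longrightarrow> \<pi> w > 0"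
    and ps: "(\<Sum>w\<in>\<Omega>. \<pi> w) = 1"
    and Qnn: "\<And>w w'. w \<in> \<Omega> \<Longrightarrow> w' \<in> \<Omega> \<Longrightarrow> w \<noteq> w' \<Longrightarrow> Q w w' \<ge> 0"
    using rc unfolding reversible_chain_def by auto
  define m where "m = expect \<Omega> \<pi> f"
  have mpos: "m > 0" unfolding m_def expect_def
    using fin ne pp fp by (intro sum_pos) auto
  define g where "g = (\<lambda>w. (f w / m + 1) / 2)"
  have gge: "\<forall>w\<in>\<Omega>. g w > 0 \<and> g w \<ge> 1/2"
  proof
    fix w assume "w \<in> \<Omega>"
    hence "f w / m > 0" using fp mpos by simp
    thus "g w > 0 \<and> g w \<ge> 1/2" unfolding g_def by simp
  qed
  have Eg: "expect \<Omega> \<pi> g = 1"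
  proof -
    have "expect \<Omega> \<pi> g = (\<Sum>w\<in>\<Omega>. (\<pi> w * f w) / (2*m) + \<pi> w / 2)"
      unfolding expect_def g_def by (intro sum.cong) (auto simp: field_simps)
    also have "\<dots> = m / (2*m) + 1/2"
      by (simp add: sum.distrib sum_divide_distrib[symmetric] ps m_def expect_def)
    finally show ?thesis using mpos by simp
  qed
  have Hg: "Ent \<Omega> \<pi> g \<le> K * dirichlet_log \<Omega> Q \<pi> g" using H gge Eg by blast
  define psi where "psi = (\<lambda>x::real. x * ln x - x + 1)"
  have Entg: "Ent \<Omega> \<pi> g = (\<Sum>w\<in>\<Omega>. \<pi> w * psi (g w))"
  proof -
    have "(\<Sum>w\<in>\<Omega>. \<pi> w * psi (g w)) = (\<Sum>w\<in>\<Omega>. \<pi> w * (g w * ln (g w))) - (\<Sum>w\<in>\<Omega>. \<pi> w * g w) + (\<Sum>w\<in>\<Omega>. \<pi> w)"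
      unfolding psi_def by (simp add: sum.distrib sum_subtractf algebra_simps)
    also have "\<dots> = (\<Sum>w\<in>\<Omega>. \<pi> w * (g w * ln (g w)))" using Eg ps unfolding expect_def by simp
    finally show ?thesis unfolding Ent_def using Eg by (simp add: expect_def)
  qed
  have Entf: "Ent \<Omega> \<pi> f = m * (\<Sum>w\<in>\<Omega>. \<pi> w * psi (f w / m))"
  proof -
    have "m * (\<Sum>w\<in>\<Omega>. \<pi> w * psi (f w / m)) = (\<Sum>w\<in>\<Omega>. \<pi> w * (f w * (ln (f w) - ln m)) - \<pi> w * f w + m * \<pi> w)"
      unfolding psi_def sum_distrib_left
    proof (intro sum.cong refl)
      fix w assume "w \<in> \<Omega>"
      hence "f w > 0" using fp by auto
      thus "m * (\<pi> w * (f w / m * ln (f w / m) - f w / m + 1)) = \<pi> w * (f w * (ln (f w) - ln m)) - \<pi> w * f w + m * \<pi> w"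
        using mpos by (simp add: ln_div field_simps)
    qed
    also have "\<dots> = (\<Sum>w\<in>\<Omega>. \<pi> w * (f w * (ln (f w) - ln m))) - (\<Sum>w\<in>\<Omega>. \<pi> w * f w) + m * (\<Sum>w\<in>\<Omega>. \<pi> w)"
      by (simp add: sum.distrib sum_subtractf sum_distrib_left)
    also have "\<dots> = (\<Sum>w\<in>\<Omega>. \<pi> w * (f w * (ln (f w) - ln m)))" using ps unfolding m_def expect_def by simp
    finally show ?thesis unfolding Ent_def m_def[symmetric] by (simp add: expect_def)
  qed
  have S: "(\<Sum>w\<in>\<Omega>. \<pi> w * psi (f w / m)) \<le> 8 * (\<Sum>w\<in>\<Omega>. \<pi> w * psi (g w))"
    unfolding sum_distrib_left
  proof (intro sum_mono)
    fix w assume w: "w \<in> \<Omega>"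
    have "psi (f w / m) \<le> 8 * psi (g w)" unfolding psi_def g_def
      using psi_cmp[of "f w / m"] fp w mpos by simp
    thus "\<pi> w * psi (f w / m) \<le> 8 * (\<pi> w * psi (g w))"
      using pp[OF w] mult_left_mono[of "psi (f w / m)" "8 * psi (g w)" "\<pi> w"] by simp
  qed
  have D: "dirichlet_log \<Omega> Q \<pi> g \<le> dirichlet_log \<Omega> Q \<pi> f / (2*m)"
  proof -
    have "(\<Sum>w\<in>\<Omega>. \<Sum>w'\<in>\<Omega>. \<pi> w * Q w w' * (g w - g w') * ln (g w / g w'))
        \<le> (\<Sum>w\<in>\<Omega>. \<Sum>w'\<in>\<Omega>. \<pi> w * Q w w' * (f w - f w') * ln (f w / f w') / (2*m))"
    proof (intro sum_mono)
      fix w w' assume w: "w \<in> \<Omega>" and w': "w' \<in> \<Omega>"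
      show "\<pi> w * Q w w' * (g w - g w') * ln (g w / g w') \<le> \<pi> w * Q w w' * (f w - f w') * ln (f w / f w') / (2*m)"
      proof (cases "w = w'")
        case True thus ?thesis by simp
      next
        case False
        have c: "\<pi> w * Q w w' / (2*m) \<ge> 0" using Qnn[OF w w' False] pp[OF w] mpos by simp
        have a: "f w > 0" "f w' > 0" using fp w w' by auto
        have gd: "g w - g w' = (f w - f w') / (2*m)" unfolding g_def using mpos by (simp add: field_simps)
        have gx: "\<And>x. g x = (f x + m) / (2*m)" unfolding g_def using mpos by (simp add: field_simps)
        have gq: "g w / g w' = (f w + m) / (f w' + m)" unfolding gx using mpos a by simp
        have l1: "ln (g w / g w') = ln (f w + m) - ln (f w' + m)" unfolding gq using a mpos by (simp add: ln_div)
        have l2: "ln (f w / f w') = ln (f w) - ln (f w')" using a by (simp add: ln_div)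
        have dt: "(f w - f w') * (ln (f w + m) - ln (f w' + m)) \<le> (f w - f w') * (ln (f w) - ln (f w'))"
          using dir_term[OF a mpos] .
        have "\<pi> w * Q w w' * (g w - g w') * ln (g w / g w') = (\<pi> w * Q w w' / (2*m)) * ((f w - f w') * (ln (f w + m) - ln (f w' + m)))"
          unfolding gd l1 by (simp add: field_simps)
        also have "\<dots> \<le> (\<pi> w * Q w w' / (2*m)) * ((f w - f w') * (ln (f w) - ln (f w')))"
          using mult_left_mono[OF dt c] .
        also have "\<dots> = \<pi> w * Q w w' * (f w - f w') * ln (f w / f w') / (2*m)"
          unfolding l2 by (simp add: field_simps)
        finally show ?thesis .
      qed
    qed
    also have "\<dots> = (\<Sum>w\<in>\<Omega>. \<Sum>w'\<in>\<Omega>. \<pi> w * Q w w' * (f w - f w') * ln (f w / f w')) / (2*m)"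
      by (simp add: sum_divide_distrib)
    finally show ?thesis unfolding dirichlet_log_def by simp
  qed
  have "Ent \<Omega> \<pi> f \<le> m * (8 * Ent \<Omega> \<pi> g)"
    unfolding Entf Entg using mult_left_mono[OF S] mpos by simp
  also have "\<dots> \<le> m * (8 * (K * dirichlet_log \<Omega> Q \<pi> g))"
    using Hg mpos by simp
  also have "\<dots> \<le> m * (8 * (K * (dirichlet_log \<Omega> Q \<pi> f / (2*m))))"
  proof -
    have "K * dirichlet_log \<Omega> Q \<pi> g \<le> K * (dirichlet_log \<Omega> Q \<pi> f / (2*m))"
      using mult_left_mono[OF D] K by simp
    hence "8 * (K * dirichlet_log \<Omega> Q \<pi> g) \<le> 8 * (K * (dirichlet_log \<Omega> Q \<pi> f / (2*m)))" by simp
    thus ?thesis using mpos mult_left_mono[of "8 * (K * dirichlet_log \<Omega> Q \<pi> g)" "8 * (K * (dirichlet_log \<Omega> Q \<pi> f / (2*m)))" m] by simp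
  qed
  also have "\<dots> = 4 * K * dirichlet_log \<Omega> Q \<pi> f" using mpos by (simp add: field_simps)
  finally show ?thesis .
qed

theorem mainTheorem7:
  shows "\<exists>c C :: real. c > 0 \<and> C > 0 \<and>
    (\<forall>(\<Omega> :: nat set) (Q :: nat \<Rightarrow> nat \<Rightarrow> real) (\<pi> :: nat \<Rightarrow> real) (K :: real).
       reversible_chain \<Omega> Q \<pi> \<longrightarrow> K > 0 \<longrightarrow>
       (\<forall>f. (\<forall>w\<in>\<Omega>. f w > 0 \<and> f w \<ge> c) \<longrightarrow> expect \<Omega> \<pi> f = 1 \<longrightarrow>
            Ent \<Omega> \<pi> f \<le> K * dirichlet_log \<Omega> Q \<pi> f) \<longrightarrow>
       (\<forall>f. (\<forall>w\<in>\<Omega>. f w > 0) \<longrightarrow>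
            Ent \<Omega> \<pi> f \<le> C * K * dirichlet_log \<Omega> Q \<pi> f))"
  apply (rule exI[of _ "1/2"], rule exI[of _ 4])
  using mlsi_main by auto

end
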